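(* Let $G$ be a simplicial group with $G_0=1$, let $\tilde G$ be its dummy, and let $p\colon\tilde G\to G$ be the simplicial homomorphism given in dimension $n$ by evaluation at $i_n=\mathrm{id}\colon[n]\to[n]\in B^n_n$. Then $p$ is surjective.
   Context: Let $B$ be the cosimplicial simplicial pointed set with $B^n_m$ the set of non-strictly increasing partial maps $b\colon[m]\dashrightarrow[n]$, marked element the map with empty domain; the simplicial structure in $m$ is by precomposition (domains pulled back) and the cosimplicial structure in $n$ by postcomposition. The dummy $\tilde G$ is the simplicial group with $\tilde G_n$ the group of base-point-preserving simplicial maps $B^n\to G$ (pointwise multiplication), structure homomorphisms induced by the cosimplicial structure of $B$. *)

theory Defs
  imports "HOL-Algebra.Group" "HOL-Library.FuncSet"
begin

definition delta_hom :: "nat \<Rightarrow> nat \<Rightarrow> (nat \<Rightarrow> nat) set" where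
  "delta_hom m n = {\<theta>. \<theta> \<in> {..m} \<rightarrow>\<^sub>E {..n} \<and> mono_on {..m} \<theta>}"

definition delta_id :: "nat \<Rightarrow> nat \<Rightarrow> nat" where
  "delta_id n = restrict (\<lambda>i. i) {..n}"

definition delta_comp :: "nat \<Rightarrow> (nat \<Rightarrow> nat) \<Rightarrow> (nat \<Rightarrow> nat) \<Rightarrow> nat \<Rightarrow> nat" where
  "delta_comp k \<theta> \<psi> = restrict (\<theta> \<circ> \<psi>) {..k}"

definition simplicial_group ::
  "(nat \<Rightarrow> 'g monoid) \<Rightarrow> (nat \<Rightarrow> nat \<Rightarrow> (nat \<Rightarrow> nat) \<Rightarrow> 'g \<Rightarrow> 'g) \<Rightarrow> bool" where
  "simplicial_group G act \<longleftrightarrow>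
     (\<forall>n. group (G n)) \<and>
     (\<forall>m n \<theta>. \<theta> \<in> delta_hom m n \<longrightarrow> act m n \<theta> \<in> hom (G n) (G m)) \<and>
     (\<forall>n x. x \<in> carrier (G n) \<longrightarrow> act n n (delta_id n) x = x) \<and>
     (\<forall>k m n \<theta> \<psi> x. \<theta> \<in> delta_hom m n \<longrightarrow> \<psi> \<in> delta_hom k m \<longrightarrow> x \<in> carrier (G n) \<longrightarrow>
         act k n (delta_comp k \<theta> \<psi>) x = act k m \<psi> (act m n \<theta> x))"

definition Bset :: "nat \<Rightarrow> nat \<Rightarrow> (nat \<Rightarrow> nat option) set" where
  "Bset n m = {b. dom b \<subseteq> {..m} \<and> ran b \<subseteq> {..n} \<and>
      (\<forall>i j x y. b i = Some x \<longrightarrow> b j = Some y \<longrightarrow> i \<le> j \<longrightarrow> x \<le> y)}"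

definition B_pre :: "nat \<Rightarrow> (nat \<Rightarrow> nat) \<Rightarrow> (nat \<Rightarrow> nat option) \<Rightarrow> nat \<Rightarrow> nat option" where
  "B_pre k \<theta> b = (\<lambda>i. if i \<le> k then b (\<theta> i) else None)"

definition B_post :: "(nat \<Rightarrow> nat) \<Rightarrow> (nat \<Rightarrow> nat option) \<Rightarrow> nat \<Rightarrow> nat option" where
  "B_post \<phi> b = (\<lambda>i. map_option \<phi> (b i))"

(* base-point-preserving simplicial maps B^n -> G *)
definition dummy_carrier ::
  "(nat \<Rightarrow> 'g monoid) \<Rightarrow> (nat \<Rightarrow> nat \<Rightarrow> (nat \<Rightarrow> nat) \<Rightarrow> 'g \<Rightarrow> 'g) \<Rightarrow> nat
     \<Rightarrow> (nat \<Rightarrow> (nat \<Rightarrow> nat option) \<Rightarrow> 'g) set" where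
  "dummy_carrier G act n = {f.
     (\<forall>m. \<forall>b\<in>Bset n m. f m b \<in> carrier (G m)) \<and>
     (\<forall>m b. b \<notin> Bset n m \<longrightarrow> f m b = undefined) \<and>
     (\<forall>m. f m Map.empty = \<one>\<^bsub>G m\<^esub>) \<and>
     (\<forall>k m \<theta> b. \<theta> \<in> delta_hom k m \<longrightarrow> b \<in> Bset n m \<longrightarrow>
         f k (B_pre k \<theta> b) = act k m \<theta> (f m b))}"

definition dummy ::
  "(nat \<Rightarrow> 'g monoid) \<Rightarrow> (nat \<Rightarrow> nat \<Rightarrow> (nat \<Rightarrow> nat) \<Rightarrow> 'g \<Rightarrow> 'g) \<Rightarrow> nat
     \<Rightarrow> (nat \<Rightarrow> (nat \<Rightarrow> nat option) \<Rightarrow> 'g) monoid" where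
  "dummy G act n = \<lparr> carrier = dummy_carrier G act n,
     mult = (\<lambda>f g. \<lambda>m b. if b \<in> Bset n m then f m b \<otimes>\<^bsub>G m\<^esub> g m b else undefined),
     one = (\<lambda>m b. if b \<in> Bset n m then \<one>\<^bsub>G m\<^esub> else undefined) \<rparr>"

definition dummy_act :: "nat \<Rightarrow> (nat \<Rightarrow> nat) \<Rightarrow> (nat \<Rightarrow> (nat \<Rightarrow> nat option) \<Rightarrow> 'g)
     \<Rightarrow> nat \<Rightarrow> (nat \<Rightarrow> nat option) \<Rightarrow> 'g" where
  "dummy_act m \<phi> f = (\<lambda>k b. if b \<in> Bset m k then f k (B_post \<phi> b) else undefined)"

definition i_elem :: "nat \<Rightarrow> nat \<Rightarrow> nat option" where
  "i_elem n = (\<lambda>i. if i \<le> n then Some i else None)"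

definition dummy_proj :: "nat \<Rightarrow> (nat \<Rightarrow> (nat \<Rightarrow> nat option) \<Rightarrow> 'g) \<Rightarrow> 'g" where
  "dummy_proj n f = f n (i_elem n)"

end

theory Submission
  imports Defs
begin


fun lprod :: "('a,'b) monoid_scheme \<Rightarrow> 'a list \<Rightarrow> 'a" where
  "lprod H [] = \<one>\<^bsub>H\<^esub>"
| "lprod H (a#as) = a \<otimes>\<^bsub>H\<^esub> lprod H as"

context group begin

lemma lprod_closed: "set xs \<subseteq> carrier G \<Longrightarrow> lprod G xs \<in> carrier G"
  by (induction xs) auto

lemma lprod_append: "set xs \<subseteq> carrier G \<Longrightarrow> set ys \<subseteq> carrier G \<Longrightarrow>
   lprod G (xs @ ys) = lprod G xs \<otimes> lprod G ys"
  by (induction xs) (auto simp: lprod_closed m_assoc)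

lemma lprod_ones: "\<forall>x\<in>set xs. x = \<one> \<Longrightarrow> lprod G xs = \<one>"
  by (induction xs) auto

lemma lprod_single:
  assumes "\<forall>l<N. l \<noteq> p \<longrightarrow> f l = \<one>" "\<forall>l<N. f l \<in> carrier G"
  shows "lprod G (map f [0..<N]) = (if p < N then f p else \<one>)"
  using assms
proof (induction N)
  case 0 then show ?case by simp
next
  case (Suc N)
  have cl: "set (map f [0..<N]) \<subseteq> carrier G" using Suc.prems by auto
  have "lprod G (map f [0..<Suc N]) = lprod G (map f [0..<N]) \<otimes> lprod G [f N]"
    using lprod_append[OF cl, of "[f N]"] Suc.prems by simp
  also have "\<dots> = (if p < N then f p else \<one>) \<otimes> f N" using Suc by simp
  finally show ?case using Suc.prems by (auto simp: less_Suc_eq)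
qed

end

lemma lprod_hom:
  assumes "h \<in> hom G H" "group G" "group H" "set xs \<subseteq> carrier G"
  shows "h (lprod G xs) = lprod H (map h xs)"
  using assms(4)
proof (induction xs)
  case Nil then show ?case using hom_one[OF assms(1-3)] by simp
next
  case (Cons a xs)
  then show ?case using hom_mult[OF assms(1)] group.lprod_closed[OF assms(2)] by simp
qed

definition prevv :: "(nat \<Rightarrow> nat) \<Rightarrow> nat \<Rightarrow> nat" where
  "prevv v l = (if l = 0 then 0 else v (l - 1))"

definition ex :: "(nat \<Rightarrow> nat) \<Rightarrow> nat \<Rightarrow> int" where
  "ex v l = int (v l) - int (prevv v l)"

definition gg :: "nat \<Rightarrow> (nat \<Rightarrow> nat) \<Rightarrow> nat \<Rightarrow> nat" where
  "gg m' \<theta> l = (if \<exists>j\<le>m'. l \<le> \<theta> j then LEAST j. j \<le> m' \<and> l \<le> \<theta> j else Suc m')"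

lemma gg_ex: "\<exists>j\<le>m'. l \<le> \<theta> j \<Longrightarrow> gg m' \<theta> l = (LEAST j. j \<le> m' \<and> l \<le> \<theta> j)"
  unfolding gg_def by simp

lemma gg_nex: "\<not>(\<exists>j\<le>m'. l \<le> \<theta> j) \<Longrightarrow> gg m' \<theta> l = Suc m'"
  unfolding gg_def by auto

lemma gg_le: "gg m' \<theta> l \<le> Suc m'"
proof (cases "\<exists>j\<le>m'. l \<le> \<theta> j")
  case True
  then have "gg m' \<theta> l \<le> m' \<and> l \<le> \<theta> (gg m' \<theta> l)"
    unfolding gg_ex[OF True] by (rule LeastI_ex)
  then show ?thesis by simp
qed (simp add: gg_nex)

lemma gg_hit: "gg m' \<theta> l \<le> m' \<Longrightarrow> l \<le> \<theta> (gg m' \<theta> l)"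
proof (cases "\<exists>j\<le>m'. l \<le> \<theta> j")
  case True
  then have "gg m' \<theta> l \<le> m' \<and> l \<le> \<theta> (gg m' \<theta> l)"
    unfolding gg_ex[OF True] by (rule LeastI_ex)
  then show ?thesis by simp
qed (simp add: gg_nex)

lemma gg_below: "j < gg m' \<theta> l \<Longrightarrow> j \<le> m' \<and> \<theta> j < l"
proof (cases "\<exists>j\<le>m'. l \<le> \<theta> j")
  case True
  assume j: "j < gg m' \<theta> l"
  have g: "gg m' \<theta> l \<le> m'" using True unfolding gg_ex[OF True] by (metis (mono_tags, lifting) LeastI_ex)
  have "\<not> (j \<le> m' \<and> l \<le> \<theta> j)" using j unfolding gg_ex[OF True] by (rule not_less_Least)
  then show ?thesis using j g by auto
next
  case False
  assume j: "j < gg m' \<theta> l"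
  then show ?thesis using False by (auto simp: gg_nex less_Suc_eq_le)
qed

lemma gg_least: "j \<le> m' \<Longrightarrow> l \<le> \<theta> j \<Longrightarrow> gg m' \<theta> l \<le> j"
  using gg_below[of j m' \<theta> l] by (meson leI not_le)


context group begin

lemma lprod_split3:
  assumes "J < K" "\<forall>j. f j \<in> carrier G"
  shows "lprod G (map f [0..<K]) = lprod G (map f [0..<J]) \<otimes> f J \<otimes> lprod G (map f [Suc J..<K])"
proof -
  have "[0..<K] = [0..<J] @ J # [Suc J..<K]"
    using assms(1) upt_add_eq_append[of 0 J "K - J"] upt_conv_Cons[of J K] by simp
  then have "lprod G (map f [0..<K]) = lprod G (map f [0..<J]) \<otimes> (f J \<otimes> lprod G (map f [Suc J..<K]))"
    using assms(2) lprod_append[of "map f [0..<J]" "f J # map f [Suc J..<K]"] by (simp add: image_subset_iff)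
  then show ?thesis using assms(2) by (simp add: m_assoc lprod_closed image_subset_iff)
qed

lemma telescope:
  fixes A :: "nat \<Rightarrow> 'a" and v :: "nat \<Rightarrow> nat"
  assumes th_mono: "mono_on {..m'} \<theta>" and th_rng: "\<forall>j\<le>m'. \<theta> j \<le> m"
    and A: "\<forall>j. A j \<in> carrier G" and A1: "A (Suc m') = \<one>"
  shows "lprod G (map (\<lambda>l. A (gg m' \<theta> l) [^] ex v l) [0..<Suc m])
       = lprod G (map (\<lambda>j. A j [^] ex (\<lambda>a. v (\<theta> a)) j) [0..<Suc m'])"
proof -
  let ?g = "gg m' \<theta>"
  let ?F = "\<lambda>l. A (?g l) [^] ex v l"
  let ?H = "\<lambda>j. A j [^] ex (\<lambda>a. v (\<theta> a)) j"
  have Fc: "\<forall>l. ?F l \<in> carrier G" and Hc: "\<forall>j. ?H j \<in> carrier G" using A by auto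
  have inv: "lprod G (map ?F [0..<Suc l]) = lprod G (map ?H [0..<?g l]) \<otimes>
      A (?g l) [^] (int (v l) - int (prevv (\<lambda>a. v (\<theta> a)) (?g l)))" if "l \<le> m" for l
    using that
  proof (induction l)
    case 0
    have "?g 0 = 0" using gg_least[of 0 m' 0 \<theta>] by simp
    then show ?case using A by (simp add: ex_def prevv_def)
  next
    case (Suc l)
    let ?J = "?g l" and ?J' = "?g (Suc l)"
    have IH: "lprod G (map ?F [0..<Suc l]) = lprod G (map ?H [0..<?J]) \<otimes>
      A ?J [^] (int (v l) - int (prevv (\<lambda>a. v (\<theta> a)) ?J))" by (rule Suc.IH) (use Suc.prems in simp)
    have step: "lprod G (map ?F [0..<Suc (Suc l)]) = lprod G (map ?F [0..<Suc l]) \<otimes> ?F (Suc l)"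
      using lprod_append[of "map ?F [0..<Suc l]" "[?F (Suc l)]"] Fc by (auto simp: image_subset_iff)
    have JJ: "?J \<le> ?J'"
    proof (rule ccontr)
      assume "\<not> ?J \<le> ?J'"
      then have "?J' < ?J" by simp
      then have "?J' \<le> m' \<and> \<theta> ?J' < l" using gg_below by blast
      moreover then have "Suc l \<le> \<theta> ?J'" using gg_hit by blast
      ultimately show False by simp
    qed
    show ?case
    proof (cases "?J' = ?J")
      case True
      have "lprod G (map ?F [0..<Suc (Suc l)]) = lprod G (map ?H [0..<?J]) \<otimes>
         (A ?J [^] (int (v l) - int (prevv (\<lambda>a. v (\<theta> a)) ?J)) \<otimes> A ?J [^] ex v (Suc l))"
        using step IH True A Hc by (simp add: m_assoc lprod_closed image_subset_iff)
      also have "A ?J [^] (int (v l) - int (prevv (\<lambda>a. v (\<theta> a)) ?J)) \<otimes> A ?J [^] ex v (Suc l)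
          = A ?J [^] (int (v (Suc l)) - int (prevv (\<lambda>a. v (\<theta> a)) ?J))"
        using A by (simp add: int_pow_mult[symmetric] ex_def prevv_def)
      finally show ?thesis using True by simp
    next
      case False
      then have lt: "?J < ?J'" using JJ by simp
      have J'le: "?J' \<le> Suc m'" by (rule gg_le)
      have Jm: "?J \<le> m'" using lt J'le by simp
      have thJ: "\<theta> ?J = l"
        using gg_hit[OF Jm] gg_below[OF lt] by simp
      have thj: "\<theta> j = l" if "?J \<le> j" "j < ?J'" for j
      proof -
        have "j \<le> m' \<and> \<theta> j < Suc l" using gg_below that(2) by blast
        moreover have "\<theta> ?J \<le> \<theta> j" using th_mono Jm that(1) calculation
          by (auto simp: mono_on_def)
        ultimately show ?thesis using thJ by simp
      qed
      have ones: "lprod G (map ?H [Suc ?J..<?J']) = \<one>"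
      proof (rule lprod_ones, clarsimp)
        fix j assume "Suc ?J \<le> j" "j < ?J'"
        then have "\<theta> j = l" "\<theta> (j - 1) = l" using thj by auto
        then have "ex (\<lambda>a. v (\<theta> a)) j = 0" using \<open>Suc ?J \<le> j\<close> by (simp add: ex_def prevv_def)
        then show "A j [^] ex (\<lambda>a. v (\<theta> a)) j = \<one>" by simp
      qed
      have pvJ': "prevv (\<lambda>a. v (\<theta> a)) ?J' = v l"
        using lt thj[of "?J' - 1"] by (simp add: prevv_def)
      have HJ: "?H ?J = A ?J [^] (int (v l) - int (prevv (\<lambda>a. v (\<theta> a)) ?J))"
        using thJ by (simp add: ex_def)
      have "lprod G (map ?H [0..<?J']) = lprod G (map ?H [0..<?J]) \<otimes> ?H ?J"
        using lprod_split3[OF lt Hc] ones Hc by (simp add: lprod_closed image_subset_iff)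
      then show ?thesis using step IH HJ pvJ'
        by (simp add: ex_def prevv_def)
    qed
  qed
  have fin: "lprod G (map ?F [0..<Suc m]) = lprod G (map ?H [0..<?g m]) \<otimes>
      A (?g m) [^] (int (v m) - int (prevv (\<lambda>a. v (\<theta> a)) (?g m)))" using inv by simp
  show ?thesis
  proof (cases "?g m \<le> m'")
    case False
    then have "?g m = Suc m'" using gg_le[of m' \<theta> m] by simp
    then show ?thesis using fin A1 Hc by (simp add: lprod_closed image_subset_iff)
  next
    case True
    have thJ: "\<theta> (?g m) = m" using gg_hit[OF True] th_rng True by (simp add: le_antisym)
    have thj: "\<theta> j = m" if "?g m \<le> j" "j \<le> m'" for j
      proof -
      have "\<theta> (?g m) \<le> \<theta> j" using th_mono that True by (auto simp: mono_on_def)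
      then show ?thesis using th_rng that thJ by (metis le_antisym)
    qed
    have ones: "lprod G (map ?H [Suc (?g m)..<Suc m']) = \<one>"
    proof (rule lprod_ones, rule ballI)
      fix x assume "x \<in> set (map ?H [Suc (?g m)..<Suc m'])"
      then obtain j where j: "Suc (?g m) \<le> j" "j < Suc m'" "x = ?H j" by auto
      then have "\<theta> j = m" "\<theta> (j - 1) = m" using thj by auto
      then have "ex (\<lambda>a. v (\<theta> a)) j = 0" using j by (simp add: ex_def prevv_def)
      then show "x = \<one>" using j by simp
    qed
    have "lprod G (map ?H [0..<Suc m']) = lprod G (map ?H [0..<?g m]) \<otimes> ?H (?g m)"
      using lprod_split3[of "?g m" "Suc m'" ?H] True ones Hc by (simp add: lprod_closed image_subset_iff)
    then show ?thesis using fin thJ by (simp add: ex_def)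
  qed
qed

end



fun rr :: "nat \<Rightarrow> (nat \<Rightarrow> nat \<Rightarrow> nat) \<Rightarrow> nat \<Rightarrow> nat" where
  "rr 0 w i = 0"
| "rr (Suc k) w i = (if rr k w i = k \<and> w (Suc k) i \<noteq> 0 then Suc k else rr k w i)"

definition cut :: "nat \<Rightarrow> nat \<Rightarrow> nat" where
  "cut l i = (if l \<le> i then 1 else 0)"

lemma rr_le: "rr k w i \<le> k"
  by (induction k) auto

lemma rr_local: "(\<forall>j. w j i = w' j i') \<Longrightarrow> rr k w i = rr k w' i'"
  by (induction k) auto

lemma rr_mono: "(\<forall>j. 0 < j \<and> j \<le> k \<longrightarrow> w j i \<noteq> 0 \<longrightarrow> w j i' \<noteq> 0) \<Longrightarrow> rr k w i \<le> rr k w i'"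
proof (induction k)
  case 0 then show ?case by simp
next
  case (Suc k)
  then have IH: "rr k w i \<le> rr k w i'" by auto
  have "rr k w i' \<le> k" by (rule rr_le)
  then show ?case using IH Suc.prems by auto
qed

lemma rr_zero: "rr k (\<lambda>_ _. 0) i = 0"
  by (induction k) auto

lemma rr_cut: "(\<forall>j. w j i = cut j i) \<Longrightarrow> rr k w i = min k i"
  by (induction k) (auto simp: cut_def)

lemma cut_mono: "mono_on A (cut l)"
  by (auto simp: mono_on_def cut_def)

lemma cut_gg:
  assumes "\<theta> \<in> delta_hom m' m" "i \<le> m'"
  shows "cut l (\<theta> i) = cut (gg m' \<theta> l) i"
proof -
  have mono: "mono_on {..m'} \<theta>" using assms(1) by (simp add: delta_hom_def)
  have "l \<le> \<theta> i \<longleftrightarrow> gg m' \<theta> l \<le> i"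
  proof
    assume "l \<le> \<theta> i" then show "gg m' \<theta> l \<le> i" using gg_least assms(2) by blast
  next
    assume a: "gg m' \<theta> l \<le> i"
    then have g: "gg m' \<theta> l \<le> m'" using assms(2) by simp
    then have "l \<le> \<theta> (gg m' \<theta> l)" by (rule gg_hit)
    also have "\<dots> \<le> \<theta> i" using mono a g assms(2) by (auto simp: mono_on_def)
    finally show "l \<le> \<theta> i" .
  qed
  then show ?thesis by (simp add: cut_def)
qed

locale sg =
  fixes G :: "nat \<Rightarrow> 'g monoid" and act :: "nat \<Rightarrow> nat \<Rightarrow> (nat \<Rightarrow> nat) \<Rightarrow> 'g \<Rightarrow> 'g"
    and n :: nat and y :: 'g
  assumes sg: "simplicial_group G act"
    and G0: "carrier (G 0) = {\<one>\<^bsub>G 0\<^esub>}"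
    and y: "y \<in> carrier (G n)"
begin

lemma grp: "group (G m)" using sg by (simp add: simplicial_group_def)

lemma act_hom: "\<theta> \<in> delta_hom m' m \<Longrightarrow> act m' m \<theta> \<in> hom (G m) (G m')"
  using sg by (simp add: simplicial_group_def)

lemma act_gh: "\<theta> \<in> delta_hom m' m \<Longrightarrow> group_hom (G m) (G m') (act m' m \<theta>)"
  using act_hom grp by (simp add: group_hom_def group_hom_axioms_def)

lemma act_comp: "\<theta> \<in> delta_hom m n' \<Longrightarrow> \<psi> \<in> delta_hom k m \<Longrightarrow> x \<in> carrier (G n') \<Longrightarrow>
         act k n' (delta_comp k \<theta> \<psi>) x = act k m \<psi> (act m n' \<theta> x)"
  using sg by (simp add: simplicial_group_def)

lemma act_id: "x \<in> carrier (G m) \<Longrightarrow> act m m (delta_id m) x = x"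
  using sg by (simp add: simplicial_group_def)

lemma act_closed: "\<theta> \<in> delta_hom m' m \<Longrightarrow> x \<in> carrier (G m) \<Longrightarrow> act m' m \<theta> x \<in> carrier (G m')"
  using act_hom by (auto simp: hom_def)

lemma act_const: "act m n (restrict (\<lambda>_. 0) {..m}) y = \<one>\<^bsub>G m\<^esub>"
proof -
  let ?a = "restrict (\<lambda>_::nat. 0::nat) {..0}" and ?b = "restrict (\<lambda>_::nat. 0::nat) {..m}"
  have a: "?a \<in> delta_hom 0 n" by (auto simp: delta_hom_def mono_on_def)
  have b: "?b \<in> delta_hom m 0" by (auto simp: delta_hom_def mono_on_def)
  have c: "delta_comp m ?a ?b = ?b" by (auto simp: delta_comp_def restrict_def)
  have "act 0 n ?a y \<in> carrier (G 0)" using act_closed[OF a y] .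
  then have "act 0 n ?a y = \<one>\<^bsub>G 0\<^esub>" using G0 by simp
  then have "act m n ?b y = act m 0 ?b \<one>\<^bsub>G 0\<^esub>" using act_comp[OF a b y] c by simp
  also have "\<dots> = \<one>\<^bsub>G m\<^esub>" using group_hom.hom_one[OF act_gh[OF b]] .
  finally show ?thesis .
qed

fun Psi :: "nat \<Rightarrow> nat \<Rightarrow> (nat \<Rightarrow> nat \<Rightarrow> nat) \<Rightarrow> 'g" where
  "Psi 0 m w = act m n (restrict (rr n w) {..m}) y"
| "Psi (Suc k) m w =
     lprod (G m) (map (\<lambda>l. (Psi k m (w(Suc k := cut l)) \<otimes>\<^bsub>G m\<^esub> inv\<^bsub>G m\<^esub> (Psi k m (w(Suc k := (\<lambda>_. 0)))))
        [^]\<^bsub>G m\<^esub> ex (w (Suc k)) l) [0..<Suc m])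
     \<otimes>\<^bsub>G m\<^esub> Psi k m (w(Suc k := (\<lambda>_. 0)))"

lemma Psi_local: "(\<forall>j i. i \<le> m \<longrightarrow> w j i = w' j i) \<Longrightarrow> Psi k m w = Psi k m w'"
proof (induction k arbitrary: w w')
  case 0
  have "restrict (rr n w) {..m} = restrict (rr n w') {..m}"
    using 0 rr_local[of w _ w' _ n] by (auto simp: restrict_def)
  then show ?case by simp
next
  case (Suc k)
  have e0: "Psi k m (w(Suc k := (\<lambda>_. 0))) = Psi k m (w'(Suc k := (\<lambda>_. 0)))"
    by (rule Suc.IH) (use Suc.prems in auto)
  have el: "Psi k m (w(Suc k := cut l)) = Psi k m (w'(Suc k := cut l))" for l
    by (rule Suc.IH) (use Suc.prems in auto)
  have ex: "ex (w (Suc k)) l = ex (w' (Suc k)) l" if "l \<in> set [0..<Suc m]" for l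
    using that Suc.prems by (auto simp: ex_def prevv_def)
  have "map (\<lambda>l. (Psi k m (w(Suc k := cut l)) \<otimes>\<^bsub>G m\<^esub> inv\<^bsub>G m\<^esub> (Psi k m (w(Suc k := (\<lambda>_. 0)))))
        [^]\<^bsub>G m\<^esub> ex (w (Suc k)) l) [0..<Suc m] =
      map (\<lambda>l. (Psi k m (w'(Suc k := cut l)) \<otimes>\<^bsub>G m\<^esub> inv\<^bsub>G m\<^esub> (Psi k m (w'(Suc k := (\<lambda>_. 0)))))
        [^]\<^bsub>G m\<^esub> ex (w' (Suc k)) l) [0..<Suc m]"
    by (rule map_cong[OF refl]) (simp only: e0 el ex)
  then show ?case by (simp only: Psi.simps e0)
qed


lemma theta_facts:
  assumes "\<theta> \<in> delta_hom m' m"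
  shows "mono_on {..m'} \<theta>" "\<forall>j\<le>m'. \<theta> j \<le> m"
  using assms by (auto simp: delta_hom_def PiE_def Pi_def)

lemma Psi0_nat:
  assumes mono: "\<forall>j. 0 < j \<and> j \<le> n \<longrightarrow> mono_on {..m} (w j)"
  shows "Psi 0 m w \<in> carrier (G m) \<and> (\<forall>m' \<theta>. \<theta> \<in> delta_hom m' m \<longrightarrow>
            Psi 0 m' (\<lambda>j i. w j (\<theta> i)) = act m' m \<theta> (Psi 0 m w))"
proof -
  let ?phi = "restrict (rr n w) {..m}"
  have phi: "?phi \<in> delta_hom m n"
    unfolding delta_hom_def
  proof (intro CollectI conjI)
    show "?phi \<in> {..m} \<rightarrow>\<^sub>E {..n}" using rr_le by auto
    show "mono_on {..m} ?phi"
    proof (rule mono_onI)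
      fix i i' assume ii: "i \<in> {..m}" "i' \<in> {..m}" "i \<le> i'"
      have "rr n w i \<le> rr n w i'"
      proof (rule rr_mono, intro allI impI)
        fix j assume "0 < j \<and> j \<le> n" "w j i \<noteq> 0"
        then have "w j i \<le> w j i'" using mono ii by (auto simp: mono_on_def)
        then show "w j i' \<noteq> 0" using \<open>w j i \<noteq> 0\<close> by simp
      qed
      then show "?phi i \<le> ?phi i'" using ii by simp
    qed
  qed
  have c: "Psi 0 m w \<in> carrier (G m)" using act_closed[OF phi y] by simp
  have nat: "Psi 0 m' (\<lambda>j i. w j (\<theta> i)) = act m' m \<theta> (Psi 0 m w)" if th: "\<theta> \<in> delta_hom m' m" for m' \<theta>
  proof -
    have "restrict (rr n (\<lambda>j i. w j (\<theta> i))) {..m'} = delta_comp m' ?phi \<theta>"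
    proof -
      have "rr n (\<lambda>j i. w j (\<theta> i)) i = ?phi (\<theta> i)" if "i \<le> m'" for i
        using theta_facts(2)[OF th] that rr_local[of "\<lambda>j i. w j (\<theta> i)" i w "\<theta> i" n] by simp
      then show ?thesis by (auto simp: delta_comp_def restrict_def)
    qed
    then show ?thesis using act_comp[OF phi th y] by simp
  qed
  show ?thesis using c nat by blast
qed

lemma Psi_main:
  "k \<le> n \<Longrightarrow> (\<forall>j. k < j \<and> j \<le> n \<longrightarrow> mono_on {..m} (w j)) \<Longrightarrow>
   Psi k m w \<in> carrier (G m) \<and> (\<forall>m' \<theta>. \<theta> \<in> delta_hom m' m \<longrightarrow>
      Psi k m' (\<lambda>j i. w j (\<theta> i)) = act m' m \<theta> (Psi k m w))"
proof (induction k arbitrary: m w)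
  case 0
  then show ?case using Psi0_nat by blast
next
  case (Suc k)
  note IH = Suc.IH
  have kn: "k \<le> n" using Suc.prems by simp
  define W0 where "W0 = w(Suc k := (\<lambda>_. 0))"
  define Wl where "Wl = (\<lambda>l. w(Suc k := cut l))"
  have hyp0: "\<forall>j. k < j \<and> j \<le> n \<longrightarrow> mono_on {..m} (W0 j)"
    using Suc.prems by (auto simp: W0_def mono_on_def)
  have hypl: "\<forall>j. k < j \<and> j \<le> n \<longrightarrow> mono_on {..m} (Wl l j)" for l
    using Suc.prems cut_mono by (auto simp: Wl_def)
  interpret Gm: group "G m" by (rule grp)
  define B where "B = Psi k m W0"
  define A where "A = (\<lambda>l. Psi k m (Wl l) \<otimes>\<^bsub>G m\<^esub> inv\<^bsub>G m\<^esub> B)"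
  have Bc: "B \<in> carrier (G m)" using IH[OF kn hyp0] by (simp add: B_def)
  have Ac: "A l \<in> carrier (G m)" for l using IH[OF kn hypl] Bc by (simp add: A_def)
  have Psi_eq: "Psi (Suc k) m w = lprod (G m) (map (\<lambda>l. A l [^]\<^bsub>G m\<^esub> ex (w (Suc k)) l) [0..<Suc m]) \<otimes>\<^bsub>G m\<^esub> B"
    by (simp add: A_def B_def W0_def Wl_def)
  have c: "Psi (Suc k) m w \<in> carrier (G m)"
    unfolding Psi_eq by (rule Gm.m_closed[OF Gm.lprod_closed Bc]) (use Ac in auto)
  have nat: "Psi (Suc k) m' (\<lambda>j i. w j (\<theta> i)) = act m' m \<theta> (Psi (Suc k) m w)"
    if th: "\<theta> \<in> delta_hom m' m" for m' \<theta>
  proof -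
    define w' where "w' = (\<lambda>j i. w j (\<theta> i))"
    interpret h: group_hom "G m" "G m'" "act m' m \<theta>" by (rule act_gh[OF th])
    interpret Gm': group "G m'" by (rule grp)
    define B' where "B' = Psi k m' (w'(Suc k := (\<lambda>_. 0)))"
    define A' where "A' = (\<lambda>j. Psi k m' (w'(Suc k := cut j)) \<otimes>\<^bsub>G m'\<^esub> inv\<^bsub>G m'\<^esub> B')"
    have mono': "mono_on {..m'} (\<lambda>i. w j (\<theta> i))" if "Suc k < j \<and> j \<le> n" for j
    proof -
      have "mono_on {..m} (w j)" using Suc.prems that by auto
      then show ?thesis using theta_facts[OF th] by (auto simp: mono_on_def)
    qed
    have hyp0': "\<forall>j. k < j \<and> j \<le> n \<longrightarrow> mono_on {..m'} ((w'(Suc k := (\<lambda>_. 0))) j)"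
    proof (intro allI impI)
      fix j assume "k < j \<and> j \<le> n"
      then show "mono_on {..m'} ((w'(Suc k := (\<lambda>_. 0))) j)"
        using mono'[of j] by (cases "j = Suc k") (auto simp: w'_def mono_on_def)
    qed
    have hypl': "\<forall>j. k < j \<and> j \<le> n \<longrightarrow> mono_on {..m'} ((w'(Suc k := cut l)) j)" for l
    proof (intro allI impI)
      fix j assume "k < j \<and> j \<le> n"
      then show "mono_on {..m'} ((w'(Suc k := cut l)) j)"
        using mono'[of j] cut_mono by (cases "j = Suc k") (auto simp: w'_def)
    qed
    have B'c: "B' \<in> carrier (G m')" unfolding B'_def using IH[OF kn hyp0'] by (rule conjunct1)
    have Pc: "Psi k m' (w'(Suc k := cut j)) \<in> carrier (G m')" for j
      using IH[OF kn hypl'] by (rule conjunct1)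
    have A'c: "\<forall>j. A' j \<in> carrier (G m')" using Pc B'c by (simp add: A'_def)
    have hB: "act m' m \<theta> B = B'"
    proof -
      have "act m' m \<theta> B = Psi k m' (\<lambda>j i. W0 j (\<theta> i))" using IH[OF kn hyp0] th by (simp add: B_def)
      also have "(\<lambda>j i. W0 j (\<theta> i)) = w'(Suc k := (\<lambda>_. 0))" by (auto simp: W0_def w'_def)
      finally show ?thesis unfolding B'_def .
    qed
    have hA: "act m' m \<theta> (A l) = A' (gg m' \<theta> l)" for l
    proof -
      have "act m' m \<theta> (Psi k m (Wl l)) = Psi k m' (\<lambda>j i. Wl l j (\<theta> i))"
        using IH[OF kn hypl] th by simp
      also have "\<dots> = Psi k m' (w'(Suc k := cut (gg m' \<theta> l)))"
        by (rule Psi_local) (auto simp: Wl_def w'_def cut_gg[OF th])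
      finally show ?thesis using IH[OF kn hypl] Bc hB by (simp add: A_def A'_def)
    qed
    have A'1: "A' (Suc m') = \<one>\<^bsub>G m'\<^esub>"
    proof -
      have "Psi k m' (w'(Suc k := cut (Suc m'))) = B'"
        unfolding B'_def by (rule Psi_local) (auto simp: cut_def)
      then show ?thesis using B'c by (simp add: A'_def)
    qed
    have "act m' m \<theta> (Psi (Suc k) m w) =
        lprod (G m') (map (\<lambda>l. A' (gg m' \<theta> l) [^]\<^bsub>G m'\<^esub> ex (w (Suc k)) l) [0..<Suc m]) \<otimes>\<^bsub>G m'\<^esub> B'"
    proof -
      have "act m' m \<theta> (Psi (Suc k) m w) =
         act m' m \<theta> (lprod (G m) (map (\<lambda>l. A l [^]\<^bsub>G m\<^esub> ex (w (Suc k)) l) [0..<Suc m])) \<otimes>\<^bsub>G m'\<^esub> B'"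
        unfolding Psi_eq using Ac Bc hB by (simp add: Gm.lprod_closed image_subset_iff)
      also have "act m' m \<theta> (lprod (G m) (map (\<lambda>l. A l [^]\<^bsub>G m\<^esub> ex (w (Suc k)) l) [0..<Suc m]))
          = lprod (G m') (map (act m' m \<theta>) (map (\<lambda>l. A l [^]\<^bsub>G m\<^esub> ex (w (Suc k)) l) [0..<Suc m]))"
        by (rule lprod_hom[OF act_hom[OF th] grp grp]) (use Ac in auto)
      also have "map (act m' m \<theta>) (map (\<lambda>l. A l [^]\<^bsub>G m\<^esub> ex (w (Suc k)) l) [0..<Suc m])
          = map (\<lambda>l. A' (gg m' \<theta> l) [^]\<^bsub>G m'\<^esub> ex (w (Suc k)) l) [0..<Suc m]"
        using Ac hA by (simp add: h.hom_int_pow)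
      finally show ?thesis .
    qed
    also have "lprod (G m') (map (\<lambda>l. A' (gg m' \<theta> l) [^]\<^bsub>G m'\<^esub> ex (w (Suc k)) l) [0..<Suc m])
        = lprod (G m') (map (\<lambda>j. A' j [^]\<^bsub>G m'\<^esub> ex (\<lambda>a. w (Suc k) (\<theta> a)) j) [0..<Suc m'])"
      by (rule group.telescope[OF grp theta_facts[OF th] A'c A'1])
    also have "\<dots> \<otimes>\<^bsub>G m'\<^esub> B' = Psi (Suc k) m' w'"
      by (simp add: A'_def B'_def w'_def)
    finally show ?thesis by (simp add: w'_def)
  qed
  show ?case using c nat by blast
qed


lemma Psi_zero: "Psi k m (\<lambda>_ _. 0) = \<one>\<^bsub>G m\<^esub>"
proof (induction k)
  case 0
  have "restrict (rr n (\<lambda>_ _. 0)) {..m} = restrict (\<lambda>_. 0) {..m}" using rr_zero[of n] by (auto simp: restrict_def)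
  then show ?case using act_const by simp
next
  case (Suc k)
  interpret Gm: group "G m" by (rule grp)
  have z: "(\<lambda>_ _. 0::nat)(Suc k := (\<lambda>_. 0)) = (\<lambda>_ _. 0)" by auto
  have "lprod (G m) (map (\<lambda>l. (Psi k m ((\<lambda>_ _. 0)(Suc k := cut l)) \<otimes>\<^bsub>G m\<^esub> inv\<^bsub>G m\<^esub> (Psi k m ((\<lambda>_ _. 0)(Suc k := (\<lambda>_. 0)))))
        [^]\<^bsub>G m\<^esub> ex ((\<lambda>_ _. 0::nat) (Suc k)) l) [0..<Suc m]) = \<one>\<^bsub>G m\<^esub>"
    by (rule Gm.lprod_ones) (auto simp: ex_def prevv_def)
  moreover have P: "Psi k m ((\<lambda>_ _. 0)(Suc k := (\<lambda>_. 0))) = \<one>\<^bsub>G m\<^esub>" by (subst z) (rule Suc.IH)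
  ultimately show ?case by (simp only: Psi.simps P) simp
qed

lemma Psi_ext:
  assumes kn: "Suc k \<le> n" and mono: "\<forall>j. k < j \<and> j \<le> n \<longrightarrow> mono_on {..m} (w j)"
    and p: "p \<le> Suc m" and wc: "\<forall>i\<le>m. w (Suc k) i = cut p i"
  shows "Psi (Suc k) m w = Psi k m w"
proof -
  interpret Gm: group "G m" by (rule grp)
  have kn': "k \<le> n" using kn by simp
  define W0 where "W0 = w(Suc k := (\<lambda>_. 0))"
  define Wl where "Wl = (\<lambda>l. w(Suc k := cut l))"
  have hyp0: "\<forall>j. k < j \<and> j \<le> n \<longrightarrow> mono_on {..m} (W0 j)"
    using mono by (auto simp: W0_def mono_on_def)
  have hypl: "\<forall>j. k < j \<and> j \<le> n \<longrightarrow> mono_on {..m} (Wl l j)" for l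
    using mono cut_mono by (auto simp: Wl_def)
  define B where "B = Psi k m W0"
  define A where "A = (\<lambda>l. Psi k m (Wl l) \<otimes>\<^bsub>G m\<^esub> inv\<^bsub>G m\<^esub> B)"
  have Bc: "B \<in> carrier (G m)" unfolding B_def using Psi_main[OF kn' hyp0] by (rule conjunct1)
  have Pc: "Psi k m (Wl l) \<in> carrier (G m)" for l using Psi_main[OF kn' hypl] by (rule conjunct1)
  have Ac: "A l \<in> carrier (G m)" for l using Pc Bc by (simp add: A_def)
  have Psi_eq: "Psi (Suc k) m w = lprod (G m) (map (\<lambda>l. A l [^]\<^bsub>G m\<^esub> ex (w (Suc k)) l) [0..<Suc m]) \<otimes>\<^bsub>G m\<^esub> B"
    by (simp add: A_def B_def W0_def Wl_def)
  have exv: "ex (w (Suc k)) l = (if l = p then 1 else 0)" if "l \<le> m" for l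
    using that wc p by (cases l) (auto simp: ex_def prevv_def cut_def)
  have lp: "lprod (G m) (map (\<lambda>l. A l [^]\<^bsub>G m\<^esub> ex (w (Suc k)) l) [0..<Suc m])
      = (if p < Suc m then A p [^]\<^bsub>G m\<^esub> ex (w (Suc k)) p else \<one>\<^bsub>G m\<^esub>)"
    by (rule Gm.lprod_single) (use exv Ac in auto)
  have loc: "Psi k m (w(Suc k := cut p)) = Psi k m w"
    by (rule Psi_local) (use wc in auto)
  show ?thesis
  proof (cases "p < Suc m")
    case True
    then have "Psi (Suc k) m w = A p \<otimes>\<^bsub>G m\<^esub> B" using lp exv[of p] Psi_eq Ac by simp
    also have "\<dots> = Psi k m (Wl p)" using Pc Bc by (simp add: A_def Gm.m_assoc)
    finally show ?thesis using loc by (simp add: Wl_def)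
  next
    case False
    then have pm: "p = Suc m" using p by simp
    have "Psi (Suc k) m w = B" using lp Psi_eq Bc False by simp
    also have "B = Psi k m w" unfolding B_def W0_def
      by (rule Psi_local) (use wc pm in \<open>auto simp: cut_def\<close>)
    finally show ?thesis .
  qed
qed

end

definition wb :: "(nat \<Rightarrow> nat option) \<Rightarrow> nat \<Rightarrow> nat \<Rightarrow> nat" where
  "wb b = (\<lambda>j i. case b i of None \<Rightarrow> 0 | Some v \<Rightarrow> if j \<le> v then 1 else 0)"

lemma i_elem_Bset: "i_elem n \<in> Bset n n"
  by (auto simp: Bset_def i_elem_def ran_def dom_def split: if_splits)

lemma empty_Bset: "Map.empty \<in> Bset n m"
  by (auto simp: Bset_def)

lemma B_pre_Bset:
  assumes th: "\<theta> \<in> delta_hom k m" and b: "b \<in> Bset n m"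
  shows "B_pre k \<theta> b \<in> Bset n k"
proof -
  have mono: "mono_on {..k} \<theta>" using th by (simp add: delta_hom_def)
  have bm: "\<forall>i j x y. b i = Some x \<longrightarrow> b j = Some y \<longrightarrow> i \<le> j \<longrightarrow> x \<le> y"
    and rb: "ran b \<subseteq> {..n}" using b by (auto simp: Bset_def)
  have "dom (B_pre k \<theta> b) \<subseteq> {..k}" by (auto simp: B_pre_def dom_def)
  moreover have "ran (B_pre k \<theta> b) \<subseteq> {..n}"
    using rb by (auto simp: B_pre_def ran_def split: if_splits)
  moreover have "\<forall>i j x y. B_pre k \<theta> b i = Some x \<longrightarrow> B_pre k \<theta> b j = Some y \<longrightarrow> i \<le> j \<longrightarrow> x \<le> y"
  proof (intro allI impI)
    fix i j x y assume a: "B_pre k \<theta> b i = Some x" "B_pre k \<theta> b j = Some y" "i \<le> j"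
    then have "i \<le> k" "j \<le> k" "b (\<theta> i) = Some x" "b (\<theta> j) = Some y"
      by (auto simp: B_pre_def split: if_splits)
    moreover have "\<theta> i \<le> \<theta> j" using mono a(3) calculation by (auto simp: mono_on_def)
    ultimately show "x \<le> y" using bm by blast
  qed
  ultimately show ?thesis by (simp add: Bset_def)
qed

lemma (in sg) surj_elem:
  "\<exists>f\<in>dummy_carrier G act n. f n (i_elem n) = y"
proof -
  define f where "f = (\<lambda>m b. if b \<in> Bset n m then Psi n m (wb b) else undefined)"
  have novac: "\<forall>j. n < j \<and> j \<le> n \<longrightarrow> mono_on {..m} (w j)" for m and w :: "nat \<Rightarrow> nat \<Rightarrow> nat" by auto
  have c1: "\<forall>m. \<forall>b\<in>Bset n m. f m b \<in> carrier (G m)"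
    using Psi_main[OF le_refl novac] by (simp add: f_def)
  have c2: "\<forall>m b. b \<notin> Bset n m \<longrightarrow> f m b = undefined" by (simp add: f_def)
  have c3: "\<forall>m. f m Map.empty = \<one>\<^bsub>G m\<^esub>"
  proof
    fix m
    have "wb Map.empty = (\<lambda>_ _. 0)" by (auto simp: wb_def)
    then show "f m Map.empty = \<one>\<^bsub>G m\<^esub>" using empty_Bset Psi_zero by (simp add: f_def)
  qed
  have c4: "\<forall>k m \<theta> b. \<theta> \<in> delta_hom k m \<longrightarrow> b \<in> Bset n m \<longrightarrow>
         f k (B_pre k \<theta> b) = act k m \<theta> (f m b)"
  proof (intro allI impI)
    fix k m \<theta> b assume th: "\<theta> \<in> delta_hom k m" and b: "b \<in> Bset n m"
    have "f k (B_pre k \<theta> b) = Psi n k (wb (B_pre k \<theta> b))"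
      using B_pre_Bset[OF th b] by (simp add: f_def)
    also have "\<dots> = Psi n k (\<lambda>j i. wb b j (\<theta> i))"
      by (rule Psi_local) (auto simp: wb_def B_pre_def)
    also have "\<dots> = act k m \<theta> (Psi n m (wb b))"
      using Psi_main[OF le_refl novac] th by blast
    finally show "f k (B_pre k \<theta> b) = act k m \<theta> (f m b)" using b by (simp add: f_def)
  qed
  have fin: "f n (i_elem n) = y"
  proof -
    let ?w = "wb (i_elem n)"
    have wc: "\<forall>i\<le>n. ?w j i = cut j i" for j by (auto simp: wb_def i_elem_def cut_def)
    have monow: "mono_on {..n} (?w j)" for j
      using cut_mono[of "{..n}" j] wc[of j] by (auto simp: mono_on_def)
    have "Psi k n ?w = Psi 0 n ?w" if "k \<le> n" for k
      using that
    proof (induction k)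
      case 0 then show ?case by simp
    next
      case (Suc k)
      have "Psi (Suc k) n ?w = Psi k n ?w"
        by (rule Psi_ext[of k n ?w "Suc k"]) (use monow Suc.prems wc in auto)
      then show ?case using Suc by simp
    qed
    then have "Psi n n ?w = Psi 0 n ?w" by simp
    also have "restrict (rr n ?w) {..n} = delta_id n"
      using rr_cut wc by (auto simp: delta_id_def restrict_def)
    then have "Psi 0 n ?w = y" using act_id[OF y] by simp
    finally show ?thesis using i_elem_Bset by (simp add: f_def)
  qed
  have "f \<in> dummy_carrier G act n" unfolding dummy_carrier_def using c1 c2 c3 c4 by blast
  then show ?thesis using fin by blast
qed


theorem mainTheorem11:
  fixes G :: "nat \<Rightarrow> 'g monoid" and act :: "nat \<Rightarrow> nat \<Rightarrow> (nat \<Rightarrow> nat) \<Rightarrow> 'g \<Rightarrow> 'g"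
  assumes "simplicial_group G act"
    and "carrier (G 0) = {\<one>\<^bsub>G 0\<^esub>}"
  shows "\<forall>n. dummy_proj n ` carrier (dummy G act n) = carrier (G n)"
proof
  fix n
  show "dummy_proj n ` carrier (dummy G act n) = carrier (G n)"
  proof
    show "dummy_proj n ` carrier (dummy G act n) \<subseteq> carrier (G n)"
      using i_elem_Bset[of n] by (auto simp: dummy_def dummy_carrier_def dummy_proj_def)
  next
    show "carrier (G n) \<subseteq> dummy_proj n ` carrier (dummy G act n)"
    proof
      fix x assume x: "x \<in> carrier (G n)"
      interpret sg G act n x using assms x by unfold_locales
      obtain f where "f \<in> dummy_carrier G act n" "f n (i_elem n) = x" using surj_elem by blast
      then show "x \<in> dummy_proj n ` carrier (dummy G act n)"
        by (auto simp: dummy_def dummy_proj_def intro!: image_eqI[of x _ f])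
    qed
  qed
qed

end
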